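(* Let $A$ be a deterministic KAT automaton over $(\Sigma_0,T)$ and let $\mathfrak{s}$ assign to each $p\in\Sigma_0$ a deterministic KAT automaton $\mathfrak{s}(p)$ over $(\Sigma_1,T)$. Then $L(\mathsf{compose}^{\mathfrak{s}}(A))=\mathrm{apply}^{\mathfrak{s}'}(L(A))$, where $\mathfrak{s}'(p)=L(\mathfrak{s}(p))$.
   Context: Atoms $\mathsf{At}_T=2^T$. Guarded strings: words in $\mathsf{At}_T(\Sigma\mathsf{At}_T)^*$; guarded composition $w'\alpha\diamond\alpha x'=w'\alpha x'$ (defined only when the last atom of the left string equals the first atom of the right one). For a guarded language $L$ over $(\Sigma_0,T)$ and $\mathfrak{s}'$ mapping each $p\in\Sigma_0$ to a guarded language over $(\Sigma_1,T)$, $\mathrm{apply}^{\mathfrak{s}'}(L)$ is the set of all $\alpha_0\diamond w_0\diamond\alpha_1\diamond\cdots\diamond\alpha_{n-1}\diamond w_{n-1}\diamond\alpha_n$ (defined) where $\alpha_0p_0\alpha_1\cdots p_{n-1}\alpha_n\in L$ and each $w_i\in\mathfrak{s}'(p_i)$. Deterministic KAT automaton over $(\Sigma,T)$: $A=(Q,\delta,\iota)$, $Q$ finite, $\delta:Q\times\mathsf{At}_T\to\{\mathsf{accept},\mathsf{reject}\}+\Sigma\times Q$, $\iota:\mathsf{At}_T\to\{\mathsf{accept},\mathsf{reject}\}+\Sigma\times Q$. $L_A(\gamma)$ is the smallest set with $\gamma(\alpha)=\mathsf{accept}\Rightarrow\alpha\in L_A(\gamma)$ and $\gamma(\alpha)=(p,q)$,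 $w\in L_A(\delta(q,-))\Rightarrow\alpha pw\in L_A(\gamma)$; $L(A)=L_A(\iota)$. $\mathsf{compose}^{\mathfrak{s}}(A)$ for $A=(Q,\delta,\iota)$ and $\mathfrak{s}(p)=(Q_p,\delta_p,\iota_p)$: $\hat\delta(q,\alpha)=\mathsf{accept}$ if $\delta(q,\alpha)=\mathsf{accept}$; $=(p,q')$ if $\delta(q,\alpha)=(p,q')$ and $\iota_p(\alpha)\ne\mathsf{accept}$; $=\hat\delta(q',\alpha)$ if $\delta(q,\alpha)=(p,q')$ and $\iota_p(\alpha)=\mathsf{accept}$; $=\mathsf{reject}$ otherwise (including when the recursion does not terminate). $\hat\iota(\alpha)=\hat\delta(q,\alpha)$ if $\iota(\alpha)=(p,q)$ and $\iota_p(\alpha)=\mathsf{accept}$; else $\hat\iota(\alpha)=\iota(\alpha)$. Then $\mathsf{compose}^{\mathfrak{s}}(A)=(Q',\delta',\iota')$ over $(\Sigma_1,T)$, $Q'=\sum_{p\in\Sigma_0}Q_p\times Q$, with, for $q_p\in Q_p$, $q\in Q$: $\delta'((q_p,q),\alpha)=(p'',(q_p',q))$ if $\delta_p(q_p,\alpha)=(p'',q_p')$; $=(p'',(q_{p'},q'))$ if $\delta_p(q_p,\alpha)=\mathsf{accept}$, $\hat\delta(q,\alpha)=(p',q')$ and $\iota_{p'}(\alpha)=(p'',q_{p'})$; $=\mathsf{accept}$ if $\delta_p(q_p,\alpha)=\mathsf{accept}$ and $\hat\delta(q,\alpha)=\mathsf{accept}$; $=\mathsf{reject}$ otherwise. $\iota'(\alpha)=\mathsf{accept}$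 if $\hat\iota(\alpha)=\mathsf{accept}$; $=(p'',(q_{p'},q))$ if $\hat\iota(\alpha)=(p',q)$ and $\iota_{p'}(\alpha)=(p'',q_{p'})$; $=\mathsf{reject}$ otherwise. *)

theory Defs
  imports Main
begin

(* Atoms At_T = 2^T: with T = UNIV of a finite type 't, atoms are all values of type 't set. *)

datatype ('s, 'q) res = Accept | Reject | Go 's 'q

record ('s, 'q, 't) kat_aut =
  aut_states :: "'q set"
  aut_delta  :: "'q \<Rightarrow> 't set \<Rightarrow> ('s, 'q) res"
  aut_iota   :: "'t set \<Rightarrow> ('s, 'q) res"

definition res_ok :: "'q set \<Rightarrow> ('s, 'q) res \<Rightarrow> bool" where
  "res_ok Q r = (\<forall>p q. r = Go p q \<longrightarrow> q \<in> Q)"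

definition wf_aut :: "('s, 'q, 't) kat_aut \<Rightarrow> bool" where
  "wf_aut A = (finite (aut_states A) \<and>
     (\<forall>q \<in> aut_states A. \<forall>\<alpha>. res_ok (aut_states A) (aut_delta A q \<alpha>)) \<and>
     (\<forall>\<alpha>. res_ok (aut_states A) (aut_iota A \<alpha>)))"

(* Guarded strings  alpha_0 p_0 alpha_1 ... p_{n-1} alpha_n  as (alpha_0, [(p_0,alpha_1),...]) *)
type_synonym ('s, 't) gstr = "'t set \<times> ('s \<times> 't set) list"

definition last_atom :: "('s, 't) gstr \<Rightarrow> 't set" where
  "last_atom w = (if snd w = [] then fst w else snd (last (snd w)))"

definition gcomp :: "('s, 't) gstr \<Rightarrow> ('s, 't) gstr \<Rightarrow> ('s, 't) gstr option" where
  "gcomp u v = (if last_atom u = fst v then Some (fst u, snd u @ snd v) else None)"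

inductive in_lang :: "('q \<Rightarrow> 't set \<Rightarrow> ('s, 'q) res) \<Rightarrow> ('t set \<Rightarrow> ('s, 'q) res)
    \<Rightarrow> ('s, 't) gstr \<Rightarrow> bool"
  for \<delta> where
  acc: "\<gamma> \<alpha> = Accept \<Longrightarrow> in_lang \<delta> \<gamma> (\<alpha>, [])"
| step: "\<gamma> \<alpha> = Go p q \<Longrightarrow> in_lang \<delta> (\<delta> q) (\<beta>, xs)
          \<Longrightarrow> in_lang \<delta> \<gamma> (\<alpha>, (p, \<beta>) # xs)"

definition lang_from :: "('q \<Rightarrow> 't set \<Rightarrow> ('s, 'q) res) \<Rightarrow> ('t set \<Rightarrow> ('s, 'q) res)
    \<Rightarrow> ('s, 't) gstr set" where
  "lang_from \<delta> \<gamma> = {w. in_lang \<delta> \<gamma> w}"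

definition lang :: "('s, 'q, 't) kat_aut \<Rightarrow> ('s, 't) gstr set" where
  "lang A = lang_from (aut_delta A) (aut_iota A)"

(* apply^{s'} on a single guarded string: all defined
   alpha_0 <> w_0 <> alpha_1 <> ... <> w_{n-1} <> alpha_n  with w_i in s'(p_i)
   (right-associated; guarded composition is associative where defined) *)
fun apply_gs :: "('s0 \<Rightarrow> ('s1, 't) gstr set) \<Rightarrow> 't set \<Rightarrow> ('s0 \<times> 't set) list
    \<Rightarrow> ('s1, 't) gstr set" where
  "apply_gs s \<alpha> [] = {(\<alpha>, [])}"
| "apply_gs s \<alpha> ((p, \<beta>) # xs) =
     {r. \<exists>w u v. w \<in> s p \<and> v \<in> apply_gs s \<beta> xs \<and>
                 gcomp (\<alpha>, []) w = Some u \<and> gcomp u v = Some r}"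

definition apply_lang :: "('s0 \<Rightarrow> ('s1, 't) gstr set) \<Rightarrow> ('s0, 't) gstr set \<Rightarrow> ('s1, 't) gstr set" where
  "apply_lang s L = (\<Union>w \<in> L. apply_gs s (fst w) (snd w))"

(* hat-delta: recursion given as the least relation; non-termination yields reject *)
inductive hat_rel :: "('s0, 'q, 't) kat_aut \<Rightarrow> ('s0 \<Rightarrow> ('s1, 'r, 't) kat_aut)
    \<Rightarrow> 'q \<Rightarrow> 't set \<Rightarrow> ('s0, 'q) res \<Rightarrow> bool"
  for A s where
  h_acc: "aut_delta A q \<alpha> = Accept \<Longrightarrow> hat_rel A s q \<alpha> Accept"
| h_go: "aut_delta A q \<alpha> = Go p q' \<Longrightarrow> aut_iota (s p) \<alpha> \<noteq> Accept \<Longrightarrow> hat_rel A s q \<alpha> (Go p q')"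
| h_skip: "aut_delta A q \<alpha> = Go p q' \<Longrightarrow> aut_iota (s p) \<alpha> = Accept \<Longrightarrow> hat_rel A s q' \<alpha> r
           \<Longrightarrow> hat_rel A s q \<alpha> r"
| h_rej: "aut_delta A q \<alpha> = Reject \<Longrightarrow> hat_rel A s q \<alpha> Reject"

definition hat_delta :: "('s0, 'q, 't) kat_aut \<Rightarrow> ('s0 \<Rightarrow> ('s1, 'r, 't) kat_aut)
    \<Rightarrow> 'q \<Rightarrow> 't set \<Rightarrow> ('s0, 'q) res" where
  "hat_delta A s q \<alpha> = (if \<exists>r. hat_rel A s q \<alpha> r then THE r. hat_rel A s q \<alpha> r else Reject)"

definition hat_iota :: "('s0, 'q, 't) kat_aut \<Rightarrow> ('s0 \<Rightarrow> ('s1, 'r, 't) kat_aut)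
    \<Rightarrow> 't set \<Rightarrow> ('s0, 'q) res" where
  "hat_iota A s \<alpha> = (case aut_iota A \<alpha> of
      Go p q \<Rightarrow> (if aut_iota (s p) \<alpha> = Accept then hat_delta A s q \<alpha> else Go p q)
    | r \<Rightarrow> r)"

(* states of compose: the tagged sum  Sum_p Q_p x Q  as triples (p, q_p, q) *)
definition compose :: "('s0 \<Rightarrow> ('s1, 'r, 't) kat_aut) \<Rightarrow> ('s0, 'q, 't) kat_aut
    \<Rightarrow> ('s1, 's0 \<times> 'r \<times> 'q, 't) kat_aut" where
  "compose s A = \<lparr>
     aut_states = {(p, qp, q). qp \<in> aut_states (s p) \<and> q \<in> aut_states A},
     aut_delta = (\<lambda>(p, qp, q) \<alpha>.
        (case aut_delta (s p) qp \<alpha> of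
           Go p'' qp' \<Rightarrow> Go p'' (p, qp', q)
         | Accept \<Rightarrow>
             (case hat_delta A s q \<alpha> of
                Accept \<Rightarrow> Accept
              | Go p' q' \<Rightarrow> (case aut_iota (s p') \<alpha> of
                               Go p'' qp' \<Rightarrow> Go p'' (p', qp', q')
                             | _ \<Rightarrow> Reject)
              | Reject \<Rightarrow> Reject)
         | Reject \<Rightarrow> Reject)),
     aut_iota = (\<lambda>\<alpha>.
        (case hat_iota A s \<alpha> of
           Accept \<Rightarrow> Accept
         | Go p' q \<Rightarrow> (case aut_iota (s p') \<alpha> of
                         Go p'' qp \<Rightarrow> Go p'' (p', qp, q)
                       | _ \<Rightarrow> Reject)
         | Reject \<Rightarrow> Reject)) \<rparr>"

end

theory Submission
  imports Defs
begin

definition AP :: "('s0, 'q, 't) kat_aut \<Rightarrow> ('s0 \<Rightarrow> ('s1, 'r, 't) kat_aut)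
   \<Rightarrow> ('t set \<Rightarrow> ('s0, 'q) res) \<Rightarrow> ('s1,'t) gstr set" where
  "AP A s \<gamma> = apply_lang (\<lambda>p. lang (s p)) (lang_from (aut_delta A) \<gamma>)"

lemma apply_gs_fst: "v \<in> apply_gs S \<alpha> xs \<Longrightarrow> fst v = \<alpha>"
  by (induction S \<alpha> xs arbitrary: v rule: apply_gs.induct) (auto simp: gcomp_def split: if_splits)

lemma gcomp_Some: "gcomp u v = Some r \<longleftrightarrow> last_atom u = fst v \<and> r = (fst u, snd u @ snd v)"
  by (auto simp: gcomp_def)

lemma last_atom_Cons[simp]: "last_atom (\<alpha>, (p,\<beta>)#zs) = last_atom (\<beta>,zs)"
  by (simp add: last_atom_def)

lemma last_atom_Nil[simp]: "last_atom (\<alpha>, []) = \<alpha>"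
  by (simp add: last_atom_def)

lemma in_lang_Accept: "in_lang \<delta> \<gamma> (\<alpha>, xs) \<Longrightarrow> \<gamma> \<alpha> = Accept \<Longrightarrow> xs = []"
  by (erule in_lang.cases) auto

lemma in_lang_Reject: "in_lang \<delta> \<gamma> (\<alpha>, xs) \<Longrightarrow> \<gamma> \<alpha> = Reject \<Longrightarrow> False"
  by (erule in_lang.cases) auto

lemma in_lang_Go: "\<gamma> \<alpha> = Go p q \<Longrightarrow>
   in_lang \<delta> \<gamma> (\<alpha>, xs) \<longleftrightarrow> (\<exists>\<beta> ys. xs = (p,\<beta>)#ys \<and> in_lang \<delta> (\<delta> q) (\<beta>, ys))"
  by (auto elim: in_lang.cases intro: in_lang.step)

lemma in_lang_acc_iff: "\<gamma> \<alpha> = Accept \<Longrightarrow> in_lang \<delta> \<gamma> (\<alpha>, xs) \<longleftrightarrow> xs = []"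
  using in_lang_Accept in_lang.acc by metis

lemma AP_mem: "in_lang (aut_delta A) \<gamma> y \<Longrightarrow> x \<in> apply_gs (\<lambda>p. lang (s p)) (fst y) (snd y)
   \<Longrightarrow> x \<in> AP A s \<gamma>"
  unfolding AP_def apply_lang_def lang_from_def by blast

lemma AP_memE: "x \<in> AP A s \<gamma> \<Longrightarrow>
   \<exists>y. in_lang (aut_delta A) \<gamma> y \<and> x \<in> apply_gs (\<lambda>p. lang (s p)) (fst y) (snd y)"
  unfolding AP_def apply_lang_def lang_from_def by blast

lemma apply_gs_ConsD: "x \<in> apply_gs S \<alpha> ((p,\<beta>)#xs) \<Longrightarrow>
   \<exists>w u v. w \<in> S p \<and> v \<in> apply_gs S \<beta> xs \<and> gcomp (\<alpha>, []) w = Some u \<and> gcomp u v = Some x"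
  by (simp only: apply_gs.simps mem_Collect_eq)

lemma apply_gs_Cons_intro:
  assumes "w \<in> S p" "fst w = \<alpha>" "v \<in> apply_gs S \<beta> xs" "last_atom w = \<beta>"
  shows "(\<alpha>, snd w @ snd v) \<in> apply_gs S \<alpha> ((p,\<beta>)#xs)"
proof -
  have u: "gcomp (\<alpha>, []) w = Some (\<alpha>, snd w)" using assms(2) by (simp add: gcomp_def)
  have "last_atom (\<alpha>, snd w) = fst v" using assms(2,4) apply_gs_fst[OF assms(3)]
    by (metis prod.collapse)
  then have "gcomp (\<alpha>, snd w) v = Some (\<alpha>, snd w @ snd v)" by (simp add: gcomp_def)
  with u assms(1,3) show ?thesis by (simp only: apply_gs.simps mem_Collect_eq) blast
qed

lemma AP_char:
  "(\<alpha>, xs) \<in> AP A s \<gamma> \<longleftrightarrow> (\<gamma> \<alpha> = Accept \<and> xs = []) \<or>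
     (\<exists>p q w v. \<gamma> \<alpha> = Go p q \<and> w \<in> lang (s p) \<and> fst w = \<alpha> \<and> v \<in> AP A s (aut_delta A q)
        \<and> last_atom w = fst v \<and> xs = snd w @ snd v)"
proof
  assume "(\<alpha>, xs) \<in> AP A s \<gamma>"
  then obtain y where y: "in_lang (aut_delta A) \<gamma> y"
    and x: "(\<alpha>, xs) \<in> apply_gs (\<lambda>p. lang (s p)) (fst y) (snd y)"
    using AP_memE by blast
  from y show "(\<gamma> \<alpha> = Accept \<and> xs = []) \<or>
     (\<exists>p q w v. \<gamma> \<alpha> = Go p q \<and> w \<in> lang (s p) \<and> fst w = \<alpha> \<and> v \<in> AP A s (aut_delta A q)
        \<and> last_atom w = fst v \<and> xs = snd w @ snd v)"
  proof cases
    case (acc \<alpha>')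
    then show ?thesis using x by auto
  next
    case (step \<alpha>' p q \<beta> ys)
    from x step(1) have "(\<alpha>, xs) \<in> apply_gs (\<lambda>p. lang (s p)) \<alpha>' ((p, \<beta>) # ys)" by simp
    from apply_gs_ConsD[OF this] obtain w u v where w: "w \<in> lang (s p)" and v: "v \<in> apply_gs (\<lambda>p. lang (s p)) \<beta> ys"
      and u: "gcomp (\<alpha>', []) w = Some u" and r: "gcomp u v = Some (\<alpha>, xs)" by blast
    have vAP: "v \<in> AP A s (aut_delta A q)" using AP_mem[OF step(3)] v by simp
    obtain w1 w2 where wd: "w = (w1, w2)" by (cases w)
    from u r wd have e: "w1 = \<alpha>" "\<alpha>' = \<alpha>" "last_atom w = fst v" "xs = snd w @ snd v"
      by (auto simp: gcomp_Some)
    have f1: "fst w = \<alpha>" using wd e(1) by simp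
    have f2: "\<gamma> \<alpha> = Go p q" using step(2) e(2) by simp
    show ?thesis
      by (rule disjI2, rule exI[of _ p], rule exI[of _ q], rule exI[of _ w], rule exI[of _ v],
          intro conjI; fact f1 f2 w vAP e(3) e(4))
  qed
next
  assume "(\<gamma> \<alpha> = Accept \<and> xs = []) \<or>
     (\<exists>p q w v. \<gamma> \<alpha> = Go p q \<and> w \<in> lang (s p) \<and> fst w = \<alpha> \<and> v \<in> AP A s (aut_delta A q)
        \<and> last_atom w = fst v \<and> xs = snd w @ snd v)"
  then show "(\<alpha>, xs) \<in> AP A s \<gamma>"
  proof
    assume "\<gamma> \<alpha> = Accept \<and> xs = []"
    then show ?thesis
      by (force simp: AP_def apply_lang_def lang_from_def intro: in_lang.acc)
  next
    assume "\<exists>p q w v. \<gamma> \<alpha> = Go p q \<and> w \<in> lang (s p) \<and> fst w = \<alpha> \<and> v \<in> AP A s (aut_delta A q)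
        \<and> last_atom w = fst v \<and> xs = snd w @ snd v"
    then obtain p q w v where g: "\<gamma> \<alpha> = Go p q" and w: "w \<in> lang (s p)" and fw: "fst w = \<alpha>"
      and v: "v \<in> AP A s (aut_delta A q)" and la: "last_atom w = fst v" and xs: "xs = snd w @ snd v"
      by blast
    from v obtain y where y: "in_lang (aut_delta A) (aut_delta A q) y"
      and vy: "v \<in> apply_gs (\<lambda>p. lang (s p)) (fst y) (snd y)"
      using AP_memE by blast
    obtain y1 y2 where yd: "y = (y1, y2)" by (cases y)
    have Y: "in_lang (aut_delta A) \<gamma> (\<alpha>, (p, y1) # y2)"
      using g y yd by (auto intro: in_lang.step)
    obtain w1 w2 where wd: "w = (w1, w2)" by (cases w)
    have "(\<alpha>, xs) \<in> apply_gs (\<lambda>p. lang (s p)) \<alpha> ((p, y1) # y2)"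
      using apply_gs_Cons_intro[of w _ p \<alpha> v y1 y2] w vy yd fw la xs
      by (simp add: apply_gs_fst)
    then show ?thesis using AP_mem[OF Y] by simp
  qed
qed


lemma AP_cong: "\<gamma> \<alpha> = \<gamma>' \<alpha> \<Longrightarrow> (\<alpha>, xs) \<in> AP A s \<gamma> \<longleftrightarrow> (\<alpha>, xs) \<in> AP A s \<gamma>'"
  unfolding AP_char by simp

lemma AP_Reject: "\<gamma> \<alpha> = Reject \<Longrightarrow> (\<alpha>, xs) \<notin> AP A s \<gamma>"
  unfolding AP_char by simp

lemma AP_Accept: "\<gamma> \<alpha> = Accept \<Longrightarrow> (\<alpha>, xs) \<in> AP A s \<gamma> \<longleftrightarrow> xs = []"
  unfolding AP_char by simp

lemma AP_Go: "\<gamma> \<alpha> = Go p q \<Longrightarrow> (\<alpha>, xs) \<in> AP A s \<gamma> \<longleftrightarrow>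
   (\<exists>w v. w \<in> lang (s p) \<and> v \<in> AP A s (aut_delta A q) \<and> gcomp w v = Some (\<alpha>, xs))"
  unfolding AP_char gcomp_Some by auto

lemma in_lang_single: "in_lang \<delta> \<gamma> w \<Longrightarrow> \<gamma> (fst w) = Accept \<Longrightarrow> w = (fst w, [])"
  by (erule in_lang.cases) auto

lemma lang_mem: "w \<in> lang B \<longleftrightarrow> in_lang (aut_delta B) (aut_iota B) w"
  by (simp add: lang_def lang_from_def)

lemma skip_AP:
  assumes "\<gamma> \<alpha> = Go p q" "aut_iota (s p) \<alpha> = Accept"
  shows "(\<alpha>, xs) \<in> AP A s \<gamma> \<longleftrightarrow> (\<alpha>, xs) \<in> AP A s (aut_delta A q)"
proof -
  have one: "w = (\<alpha>, [])" if "w \<in> lang (s p)" "fst w = \<alpha>" for w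
    using in_lang_single[of "aut_delta (s p)" "aut_iota (s p)" w] assms(2) that
    unfolding lang_mem by simp
  have two: "(\<alpha>, []) \<in> lang (s p)"
    using assms(2) unfolding lang_mem by (rule in_lang.acc)
  show ?thesis
    unfolding AP_Go[where \<gamma>=\<gamma> and \<alpha>=\<alpha>, OF assms(1)]
  proof
    assume "\<exists>w v. w \<in> lang (s p) \<and> v \<in> AP A s (aut_delta A q) \<and> gcomp w v = Some (\<alpha>, xs)"
    then obtain w v where w: "w \<in> lang (s p)" and v: "v \<in> AP A s (aut_delta A q)"
      and g: "gcomp w v = Some (\<alpha>, xs)" by blast
    from g have "fst w = \<alpha>" unfolding gcomp_Some by simp
    with one w have wd: "w = (\<alpha>, [])" by blast
    with g have "v = (\<alpha>, xs)" unfolding gcomp_Some by (cases v) simp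
    with v show "(\<alpha>, xs) \<in> AP A s (aut_delta A q)" by simp
  next
    assume "(\<alpha>, xs) \<in> AP A s (aut_delta A q)"
    moreover have "gcomp (\<alpha>, []) (\<alpha>, xs) = Some (\<alpha>, xs)" unfolding gcomp_Some by simp
    ultimately show "\<exists>w v. w \<in> lang (s p) \<and> v \<in> AP A s (aut_delta A q) \<and> gcomp w v = Some (\<alpha>, xs)"
      using two by blast
  qed
qed

lemma hat_rel_unique: "hat_rel A s q \<alpha> r1 \<Longrightarrow> hat_rel A s q \<alpha> r2 \<Longrightarrow> r1 = r2"
proof (induction arbitrary: r2 rule: hat_rel.induct)
  case (h_acc q \<alpha>)
  from h_acc.prems show ?case by cases (use h_acc.hyps in simp_all)
next
  case (h_go q \<alpha> p q')
  from h_go.prems show ?case by cases (use h_go.hyps in simp_all)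
next
  case (h_skip q \<alpha> p q' r)
  from h_skip.prems show ?case
  proof cases
    case (h_skip p2 q2)
    then show ?thesis using \<open>aut_delta A q \<alpha> = Go p q'\<close> h_skip.IH by simp
  qed (use h_skip.hyps in simp_all)
next
  case (h_rej q \<alpha>)
  from h_rej.prems show ?case by cases (use h_rej.hyps in simp_all)
qed

lemma hat_rel_ok: "hat_rel A s q \<alpha> r \<Longrightarrow> r = Go p q' \<Longrightarrow> aut_iota (s p) \<alpha> \<noteq> Accept"
  by (induction rule: hat_rel.induct) auto

lemma hat_AP: "hat_rel A s q \<alpha> r \<Longrightarrow>
   (\<alpha>, xs) \<in> AP A s (aut_delta A q) \<longleftrightarrow> (\<alpha>, xs) \<in> AP A s (\<lambda>_. r)"
proof (induction rule: hat_rel.induct)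
  case (h_skip q \<alpha> p q' r)
  then show ?case using skip_AP[of "aut_delta A q" \<alpha> p q' s xs A] by simp
qed (rule AP_cong; simp)+

lemma hat_exists_aux: "in_lang (aut_delta A) \<gamma> y \<Longrightarrow> \<gamma> = aut_delta A q \<Longrightarrow>
   x \<in> apply_gs (\<lambda>p. lang (s p)) (fst y) (snd y) \<Longrightarrow> \<exists>r. hat_rel A s q (fst y) r"
proof (induction arbitrary: q x rule: in_lang.induct)
  case (acc \<gamma> \<alpha>)
  then show ?case by (auto intro: hat_rel.h_acc)
next
  case (step \<gamma> \<alpha> p q1 \<beta> xs)
  show ?case
  proof (cases "aut_iota (s p) \<alpha> = Accept")
    case False
    then show ?thesis using step by (auto intro: hat_rel.h_go)
  next
    case True
    from step.prems obtain w u v where w: "w \<in> lang (s p)"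
      and v: "v \<in> apply_gs (\<lambda>p. lang (s p)) \<beta> xs"
      and u: "gcomp (\<alpha>, []) w = Some u" and r: "gcomp u v = Some x" by auto
    have fw: "fst w = \<alpha>" using u by (auto simp: gcomp_Some)
    have "w = (\<alpha>, [])"
      using in_lang_single[of "aut_delta (s p)" "aut_iota (s p)" w] True w fw
      by (auto simp: lang_def lang_from_def)
    then have "u = (\<alpha>, [])" using u by (auto simp: gcomp_Some)
    then have "\<beta> = \<alpha>" using r apply_gs_fst[OF v] by (auto simp: gcomp_Some)
    from step.IH[OF refl, of v] v obtain r where "hat_rel A s q1 \<beta> r" by auto
    then show ?thesis using step True \<open>\<beta> = \<alpha>\<close> by (auto intro: hat_rel.h_skip)
  qed
qed

lemma hat_exists: "(\<alpha>, xs) \<in> AP A s (aut_delta A q) \<Longrightarrow> \<exists>r. hat_rel A s q \<alpha> r"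
  unfolding AP_def apply_lang_def lang_from_def
  using hat_exists_aux apply_gs_fst by fastforce

lemma hat_delta_eq: "hat_rel A s q \<alpha> r \<Longrightarrow> hat_delta A s q \<alpha> = r"
proof -
  assume r: "hat_rel A s q \<alpha> r"
  have "(THE r. hat_rel A s q \<alpha> r) = r"
    by (rule the_equality[where P="hat_rel A s q \<alpha>", OF r]) (rule hat_rel_unique[OF _ r])
  then show ?thesis unfolding hat_delta_def using r by auto
qed

lemma HD: "(\<alpha>, xs) \<in> AP A s (aut_delta A q) \<longleftrightarrow> (\<alpha>, xs) \<in> AP A s (\<lambda>_. hat_delta A s q \<alpha>)"
proof (cases "\<exists>r. hat_rel A s q \<alpha> r")
  case True
  then obtain r where r: "hat_rel A s q \<alpha> r" by blast
  show ?thesis using hat_AP[OF r] hat_delta_eq[OF r] by simp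
next
  case False
  then have h: "hat_delta A s q \<alpha> = Reject" unfolding hat_delta_def by auto
  have "(\<alpha>, xs) \<notin> AP A s (aut_delta A q)" using False hat_exists[of \<alpha> xs A s q] by blast
  moreover have "(\<alpha>, xs) \<notin> AP A s (\<lambda>_. hat_delta A s q \<alpha>)" by (rule AP_Reject) (simp add: h)
  ultimately show ?thesis by blast
qed

lemma hat_delta_ok: "hat_delta A s q \<alpha> = Go p q' \<Longrightarrow> aut_iota (s p) \<alpha> \<noteq> Accept"
proof (cases "\<exists>r. hat_rel A s q \<alpha> r")
  case True
  then obtain r where r: "hat_rel A s q \<alpha> r" by blast
  assume "hat_delta A s q \<alpha> = Go p q'"
  then have "r = Go p q'" using hat_delta_eq[OF r] by simp
  then show ?thesis using hat_rel_ok[OF r] by blast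
next
  case False
  assume "hat_delta A s q \<alpha> = Go p q'"
  then show ?thesis using False unfolding hat_delta_def by simp
qed

lemma hat_iota_ok: "hat_iota A s \<alpha> = Go p q' \<Longrightarrow> aut_iota (s p) \<alpha> \<noteq> Accept"
  unfolding hat_iota_def
  by (auto split: res.splits if_splits dest: hat_delta_ok)

lemma HI: "(\<alpha>, xs) \<in> AP A s (aut_iota A) \<longleftrightarrow> (\<alpha>, xs) \<in> AP A s (\<lambda>_. hat_iota A s \<alpha>)"
proof (cases "aut_iota A \<alpha>")
  case (Go p q)
  show ?thesis
  proof (cases "aut_iota (s p) \<alpha> = Accept")
    case True
    have h: "hat_iota A s \<alpha> = hat_delta A s q \<alpha>" using Go True by (simp add: hat_iota_def)
    show ?thesis unfolding h
      by (rule trans[OF skip_AP[where \<gamma>="aut_iota A" and \<alpha>=\<alpha> and p=p and q=q and s=s and A=A and xs=xs, OF Go True] HD])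
  next
    case False
    have h: "hat_iota A s \<alpha> = aut_iota A \<alpha>" using Go False by (simp add: hat_iota_def)
    show ?thesis by (rule AP_cong) (simp add: h)
  qed
next
  case Accept
  then have h: "hat_iota A s \<alpha> = aut_iota A \<alpha>" by (simp add: hat_iota_def)
  show ?thesis by (rule AP_cong) (simp add: h)
next
  case Reject
  then have h: "hat_iota A s \<alpha> = aut_iota A \<alpha>" by (simp add: hat_iota_def)
  show ?thesis by (rule AP_cong) (simp add: h)
qed


definition K :: "('s0 \<Rightarrow> ('s1, 'r, 't) kat_aut) \<Rightarrow> ('s0, 'q) res \<Rightarrow> 't set
    \<Rightarrow> ('s1, 's0 \<times> 'r \<times> 'q) res" where
  "K s r \<alpha> = (case r of Accept \<Rightarrow> Accept
     | Go p' q \<Rightarrow> (case aut_iota (s p') \<alpha> of Go p'' qp \<Rightarrow> Go p'' (p', qp, q) | _ \<Rightarrow> Reject)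
     | Reject \<Rightarrow> Reject)"

lemma comp_delta: "aut_delta (compose s A) (p, qp, q) \<alpha> =
   (case aut_delta (s p) qp \<alpha> of Go p'' qp' \<Rightarrow> Go p'' (p, qp', q)
      | Accept \<Rightarrow> K s (hat_delta A s q \<alpha>) \<alpha> | Reject \<Rightarrow> Reject)"
  unfolding compose_def K_def by (simp split: res.split)

lemma comp_iota: "aut_iota (compose s A) \<alpha> = K s (hat_iota A s \<alpha>) \<alpha>"
  unfolding compose_def K_def by (simp split: res.split)

lemma GEN:
  assumes "\<gamma> \<alpha> = Go a st"
  shows "(\<exists>w v. in_lang \<delta> \<gamma> w \<and> v \<in> M \<and> gcomp w v = Some (\<alpha>, xs)) \<longleftrightarrow>
    (\<exists>\<beta> ys. xs = (a, \<beta>) # ys \<and> (\<exists>w v. in_lang \<delta> (\<delta> st) w \<and> v \<in> M \<and> gcomp w v = Some (\<beta>, ys)))"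
proof
  assume "\<exists>w v. in_lang \<delta> \<gamma> w \<and> v \<in> M \<and> gcomp w v = Some (\<alpha>, xs)"
  then obtain w1 w2 v where w: "in_lang \<delta> \<gamma> (w1, w2)" and v: "v \<in> M"
    and g: "gcomp (w1, w2) v = Some (\<alpha>, xs)" by auto
  from g have "w1 = \<alpha>" by (simp add: gcomp_Some)
  with w assms obtain \<beta> zs where z: "w2 = (a, \<beta>) # zs" "in_lang \<delta> (\<delta> st) (\<beta>, zs)"
    using in_lang_Go by metis
  have x: "xs = (a, \<beta>) # (zs @ snd v)" and la: "last_atom (\<beta>, zs) = fst v"
    using g z(1) by (simp_all add: gcomp_Some)
  have "gcomp (\<beta>, zs) v = Some (\<beta>, zs @ snd v)" using la by (simp add: gcomp_Some)
  then show "\<exists>\<beta> ys. xs = (a, \<beta>) # ys \<and> (\<exists>w v. in_lang \<delta> (\<delta> st) w \<and> v \<in> M \<and> gcomp w v = Some (\<beta>, ys))"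
    using x z(2) v by blast
next
  assume "\<exists>\<beta> ys. xs = (a, \<beta>) # ys \<and> (\<exists>w v. in_lang \<delta> (\<delta> st) w \<and> v \<in> M \<and> gcomp w v = Some (\<beta>, ys))"
  then obtain \<beta> ys w1 w2 v where xs: "xs = (a, \<beta>) # ys" and w: "in_lang \<delta> (\<delta> st) (w1, w2)"
    and v: "v \<in> M" and g: "gcomp (w1, w2) v = Some (\<beta>, ys)" by auto
  from g have "w1 = \<beta>" by (simp add: gcomp_Some)
  then have "in_lang \<delta> \<gamma> (\<alpha>, (a, \<beta>) # w2)" using w assms by (auto intro: in_lang.step)
  moreover have "gcomp (\<alpha>, (a, \<beta>) # w2) v = Some (\<alpha>, xs)"
    using g xs \<open>w1 = \<beta>\<close> by (simp add: gcomp_Some)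
  ultimately show "\<exists>w v. in_lang \<delta> \<gamma> w \<and> v \<in> M \<and> gcomp w v = Some (\<alpha>, xs)"
    using v by blast
qed

lemma ACC:
  assumes "\<gamma> \<alpha> = Accept"
  shows "(\<exists>w v. in_lang \<delta> \<gamma> w \<and> v \<in> M \<and> gcomp w v = Some (\<alpha>, xs)) \<longleftrightarrow> (\<alpha>, xs) \<in> M"
proof
  assume "\<exists>w v. in_lang \<delta> \<gamma> w \<and> v \<in> M \<and> gcomp w v = Some (\<alpha>, xs)"
  then obtain w1 w2 v where w: "in_lang \<delta> \<gamma> (w1, w2)" and v: "v \<in> M"
    and g: "gcomp (w1, w2) v = Some (\<alpha>, xs)" by auto
  from g have "w1 = \<alpha>" by (simp add: gcomp_Some)
  with w assms have "w2 = []" using in_lang_Accept by metis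
  with g \<open>w1 = \<alpha>\<close> have "v = (\<alpha>, xs)" by (cases v) (simp add: gcomp_Some)
  with v show "(\<alpha>, xs) \<in> M" by simp
next
  assume "(\<alpha>, xs) \<in> M"
  moreover have "in_lang \<delta> \<gamma> (\<alpha>, [])" using assms by (rule in_lang.acc)
  moreover have "gcomp (\<alpha>, []) (\<alpha>, xs) = Some (\<alpha>, xs)" by (simp add: gcomp_Some)
  ultimately show "\<exists>w v. in_lang \<delta> \<gamma> w \<and> v \<in> M \<and> gcomp w v = Some (\<alpha>, xs)" by blast
qed

lemma REJ:
  assumes "\<gamma> \<alpha> = Reject"
  shows "\<not> (\<exists>w v. in_lang \<delta> \<gamma> w \<and> v \<in> M \<and> gcomp w v = Some (\<alpha>, xs))"
  using assms in_lang_Reject by (fastforce simp: gcomp_Some)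


lemma MAIN:
  fixes A :: "('s0, 'q, 't) kat_aut" and s :: "'s0 \<Rightarrow> ('s1, 'r, 't) kat_aut"
  shows "length xs = n \<Longrightarrow>
  (\<forall>\<gamma> r. \<gamma> \<alpha> = K s r \<alpha> \<longrightarrow> (\<forall>p q. r = Go p q \<longrightarrow> aut_iota (s p) \<alpha> \<noteq> Accept) \<longrightarrow>
     (in_lang (aut_delta (compose s A)) \<gamma> (\<alpha>, xs) \<longleftrightarrow> (\<alpha>, xs) \<in> AP A s (\<lambda>_. r))) \<and>
  (\<forall>p qp q. in_lang (aut_delta (compose s A)) (aut_delta (compose s A) (p, qp, q)) (\<alpha>, xs) \<longleftrightarrow>
     (\<exists>w v. in_lang (aut_delta (s p)) (aut_delta (s p) qp) w \<and> v \<in> AP A s (aut_delta A q)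
        \<and> gcomp w v = Some (\<alpha>, xs)))"
proof (induction n arbitrary: \<alpha> xs rule: less_induct)
  case (less n)
  let ?D = "aut_delta (compose s A)"
  have IH: "in_lang ?D (?D (p, qp, q)) (\<beta>, ys) \<longleftrightarrow>
     (\<exists>w v. in_lang (aut_delta (s p)) (aut_delta (s p) qp) w \<and> v \<in> AP A s (aut_delta A q)
        \<and> gcomp w v = Some (\<beta>, ys))" if "length ys < n" for \<beta> ys p qp q
    using less.IH[OF that refl, of \<beta>] by blast
  have P2: "\<forall>\<gamma> r. \<gamma> \<alpha> = K s r \<alpha> \<longrightarrow> (\<forall>p q. r = Go p q \<longrightarrow> aut_iota (s p) \<alpha> \<noteq> Accept) \<longrightarrow>
     (in_lang ?D \<gamma> (\<alpha>, xs) \<longleftrightarrow> (\<alpha>, xs) \<in> AP A s (\<lambda>_. r))"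
  proof (intro allI impI)
    fix \<gamma> :: "'t set \<Rightarrow> ('s1, 's0 \<times> 'r \<times> 'q) res" and r :: "('s0, 'q) res"
    assume g: "\<gamma> \<alpha> = K s r \<alpha>" and ok: "\<forall>p q. r = Go p q \<longrightarrow> aut_iota (s p) \<alpha> \<noteq> Accept"
    show "in_lang ?D \<gamma> (\<alpha>, xs) \<longleftrightarrow> (\<alpha>, xs) \<in> AP A s (\<lambda>_. r)"
    proof (cases r)
      case Accept
      then have "\<gamma> \<alpha> = Accept" using g by (simp add: K_def)
      then show ?thesis using Accept in_lang_acc_iff[of \<gamma> \<alpha> _ xs] AP_Accept[of "\<lambda>_. r" \<alpha> xs A s] by simp
    next
      case Reject
      then have "\<gamma> \<alpha> = Reject" using g by (simp add: K_def)
      then show ?thesis using Reject in_lang_Reject[of _ \<gamma> \<alpha>] AP_Reject[of "\<lambda>_. r" \<alpha> xs A s] by auto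
    next
      case (Go p' q)
      have ne: "aut_iota (s p') \<alpha> \<noteq> Accept" using ok Go by blast
      have ap: "(\<alpha>, xs) \<in> AP A s (\<lambda>_. r) \<longleftrightarrow>
        (\<exists>w v. in_lang (aut_delta (s p')) (aut_iota (s p')) w \<and> v \<in> AP A s (aut_delta A q)
           \<and> gcomp w v = Some (\<alpha>, xs))"
        using AP_Go[of "\<lambda>_. r" \<alpha> p' q xs A s] Go by (simp add: lang_mem)
      show ?thesis
      proof (cases "aut_iota (s p') \<alpha>")
        case Accept
        then show ?thesis using ne by simp
      next
        case Reject
        then have "\<gamma> \<alpha> = Reject" using g Go by (simp add: K_def)
        then show ?thesis unfolding ap
          using in_lang_Reject[of _ \<gamma> \<alpha>] REJ[where \<gamma>="aut_iota (s p')" and \<alpha>=\<alpha>, OF Reject] by blast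
      next
        case (Go p'' qp)
        then have g2: "\<gamma> \<alpha> = Go p'' (p', qp, q)" using g \<open>r = Go p' q\<close> by (simp add: K_def)
        have "in_lang ?D \<gamma> (\<alpha>, xs) \<longleftrightarrow>
          (\<exists>\<beta> ys. xs = (p'', \<beta>) # ys \<and> in_lang ?D (?D (p', qp, q)) (\<beta>, ys))"
          by (rule in_lang_Go[where \<gamma>=\<gamma> and \<alpha>=\<alpha>, OF g2])
        also have "\<dots> \<longleftrightarrow> (\<exists>\<beta> ys. xs = (p'', \<beta>) # ys \<and>
           (\<exists>w v. in_lang (aut_delta (s p')) (aut_delta (s p') qp) w \<and> v \<in> AP A s (aut_delta A q)
              \<and> gcomp w v = Some (\<beta>, ys)))"
          by (intro arg_cong[where f=Ex] ext conj_cong refl) (use IH less.prems in simp)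
        also have "\<dots> \<longleftrightarrow> (\<alpha>, xs) \<in> AP A s (\<lambda>_. r)"
          unfolding ap by (rule GEN[where \<gamma>="aut_iota (s p')" and \<alpha>=\<alpha>, OF Go, symmetric])
        finally show ?thesis .
      qed
    qed
  qed
  have P1: "\<forall>p qp q. in_lang ?D (?D (p, qp, q)) (\<alpha>, xs) \<longleftrightarrow>
     (\<exists>w v. in_lang (aut_delta (s p)) (aut_delta (s p) qp) w \<and> v \<in> AP A s (aut_delta A q)
        \<and> gcomp w v = Some (\<alpha>, xs))"
  proof (intro allI)
    fix p qp q
    show "in_lang ?D (?D (p, qp, q)) (\<alpha>, xs) \<longleftrightarrow>
     (\<exists>w v. in_lang (aut_delta (s p)) (aut_delta (s p) qp) w \<and> v \<in> AP A s (aut_delta A q)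
        \<and> gcomp w v = Some (\<alpha>, xs))"
    proof (cases "aut_delta (s p) qp \<alpha>")
      case Accept
      then have g: "?D (p, qp, q) \<alpha> = K s (hat_delta A s q \<alpha>) \<alpha>" by (simp add: comp_delta)
      have "in_lang ?D (?D (p, qp, q)) (\<alpha>, xs) \<longleftrightarrow> (\<alpha>, xs) \<in> AP A s (\<lambda>_. hat_delta A s q \<alpha>)"
      proof -
        have ok': "\<And>p q'. hat_delta A s q \<alpha> = Go p q' \<Longrightarrow> aut_iota (s p) \<alpha> \<noteq> Accept"
          by (rule hat_delta_ok)
        show ?thesis by (rule P2[rule_format, where \<gamma>="?D (p, qp, q)", OF g ok'])
      qed
      also have "\<dots> \<longleftrightarrow> (\<alpha>, xs) \<in> AP A s (aut_delta A q)" by (rule HD[of \<alpha> xs A s q, symmetric])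
      also have "\<dots> \<longleftrightarrow> (\<exists>w v. in_lang (aut_delta (s p)) (aut_delta (s p) qp) w \<and> v \<in> AP A s (aut_delta A q)
        \<and> gcomp w v = Some (\<alpha>, xs))"
        by (rule ACC[where \<gamma>="aut_delta (s p) qp" and \<alpha>=\<alpha>, OF Accept, symmetric])
      finally show ?thesis .
    next
      case Reject
      then have g: "?D (p, qp, q) \<alpha> = Reject" by (simp add: comp_delta)
      show ?thesis using in_lang_Reject[where \<gamma>="?D (p, qp, q)" and \<alpha>=\<alpha>, OF _ g] REJ[where \<gamma>="aut_delta (s p) qp" and \<alpha>=\<alpha>, OF Reject] by blast
    next
      case (Go p'' qp')
      then have g: "?D (p, qp, q) \<alpha> = Go p'' (p, qp', q)" by (simp add: comp_delta)
      have "in_lang ?D (?D (p, qp, q)) (\<alpha>, xs) \<longleftrightarrow>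
          (\<exists>\<beta> ys. xs = (p'', \<beta>) # ys \<and> in_lang ?D (?D (p, qp', q)) (\<beta>, ys))"
        by (rule in_lang_Go[where \<gamma>="?D (p, qp, q)" and \<alpha>=\<alpha>, OF g])
      also have "\<dots> \<longleftrightarrow> (\<exists>\<beta> ys. xs = (p'', \<beta>) # ys \<and>
           (\<exists>w v. in_lang (aut_delta (s p)) (aut_delta (s p) qp') w \<and> v \<in> AP A s (aut_delta A q)
              \<and> gcomp w v = Some (\<beta>, ys)))"
        by (intro arg_cong[where f=Ex] ext conj_cong refl) (use IH less.prems in simp)
      also have "\<dots> \<longleftrightarrow> (\<exists>w v. in_lang (aut_delta (s p)) (aut_delta (s p) qp) w \<and> v \<in> AP A s (aut_delta A q)
        \<and> gcomp w v = Some (\<alpha>, xs))"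
        by (rule GEN[where \<gamma>="aut_delta (s p) qp" and \<alpha>=\<alpha>, OF Go, symmetric])
      finally show ?thesis .
    qed
  qed
  show ?case using P1 P2 by blast
qed

theorem proposition6p12:
  fixes A :: "('s0::finite, 'q, 't::finite) kat_aut"
    and s :: "'s0 \<Rightarrow> ('s1::finite, 'r, 't) kat_aut"
  assumes "wf_aut A"
    and "\<forall>p. wf_aut (s p)"
  shows "lang (compose s A) = apply_lang (\<lambda>p. lang (s p)) (lang A)"
proof (rule set_eqI)
  fix x :: "('s1, 't) gstr"
  obtain \<alpha> xs where x: "x = (\<alpha>, xs)" by (cases x)
  have "x \<in> lang (compose s A) \<longleftrightarrow> in_lang (aut_delta (compose s A)) (aut_iota (compose s A)) (\<alpha>, xs)"
    by (simp add: x lang_mem)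
  also have "\<dots> \<longleftrightarrow> (\<alpha>, xs) \<in> AP A s (\<lambda>_. hat_iota A s \<alpha>)"
  proof -
    have ok': "\<And>p q'. hat_iota A s \<alpha> = Go p q' \<Longrightarrow> aut_iota (s p) \<alpha> \<noteq> Accept"
      by (rule hat_iota_ok)
    show ?thesis
      by (rule conjunct1[OF MAIN[where A=A and s=s and xs=xs and \<alpha>=\<alpha>, OF refl], rule_format,
            where \<gamma>="aut_iota (compose s A)", OF comp_iota ok'])
  qed
  also have "\<dots> \<longleftrightarrow> (\<alpha>, xs) \<in> AP A s (aut_iota A)" using HI by blast
  also have "\<dots> \<longleftrightarrow> x \<in> apply_lang (\<lambda>p. lang (s p)) (lang A)"
    by (simp add: x AP_def lang_def)
  finally show "x \<in> lang (compose s A) \<longleftrightarrow> x \<in> apply_lang (\<lambda>p. lang (s p)) (lang A)" .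
qed

end
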